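(* (Equivalent form of the basic scheme.) Let $u:P\to\mathbb{R}^3$ be a $\Lambda$-periodic field whose Fourier transform satisfies $\hat u(0)=\hat u((\pi,\pi,\pi))=0$, and let $\sigma^{(m)},\tau^{(m)}$ ($m=1,2$) be computed from $u$. Then for every $q\in\mathcal{Q}_N$, $$\Omega(q)\cdot\big\{-\hat\tau^{(1)}(q)\cdot\overline{D(q)}+\hat\tau^{(2)}(q)\cdot D(q)\big\}=\hat u(q)-\Omega(q)\cdot\big\{\hat\sigma^{(1)}(q)\cdot\overline{D(q)}-\hat\sigma^{(2)}(q)\cdot D(q)\big\}.$$ Equivalently, for every $q\in\mathcal{Q}_N$ and every $v\in\mathbb{C}^3$ with $v=0$ when $D(q)=0$: $\Omega(q)\cdot\big\{(\lambda^0:(D(q)\otimes_s v))\cdot\overline{D(q)}+(\lambda^0:(\overline{D(q)}\otimes_s v))\cdot D(q)\big\}=v$.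
   Context: Setting: $N_1,N_2,N_3$ even, $N=N_1N_2N_3$, $\Lambda=N_1\mathbb{Z}\times N_2\mathbb{Z}\times N_3\mathbb{Z}$; strain grid $S=\mathbb{Z}^3$, displacement grid $P=(\tfrac12,\tfrac12,\tfrac12)+\mathbb{Z}^3$, fields $\Lambda$-periodic, sums over one period. $\hat f(q)=\frac1N\sum_r f(r)e^{-iq\cdot r}$, $q\in\mathcal{Q}_N=\{(2\pi h_1/N_1,2\pi h_2/N_2,2\pi h_3/N_3):0\le h_i\le N_i-1\}$. $T=\{\tfrac12(1,1,1),\tfrac12(1,-1,-1),\tfrac12(-1,1,-1),\tfrac12(-1,-1,1)\}$, $D_i(q)=\sum_{e\in T}e_ie^{iq\cdot e}$. For scalar $f$ on $P$, $r\in S$: $D^+_i[f](r)=\sum_{e\in T}e_if(r+e)$, $D^-_i[f](r)=-\sum_{e\in T}e_if(r-e)$. $\delta\epsilon^{(m)}_{ij}=\frac12(D^{\pm}_i[u_j]+D^{\pm}_j[u_i])$ ($+$ for $m=1$, $-$ for $m=2$), $\epsilon^{(m)}=\bar\epsilon+\delta\epsilon^{(m)}$ ($\bar\epsilon$ fixed symmetric), $\sigma^{(m)}=\lambda(r):(\epsilon^{(m)}-\epsilon^0(r))$ with periodic stiffness $\lambda(r)$ (minor and major symmetries) and periodic symmetric eigenstrain $\epsilon^0$; $\tau^{(m)}=\sigma^{(m)}-\lambda^0:\epsilon^{(m)}$ with $\lambda^0$ constant, with minor and major symmetries, positive definite on symmetric matrices. $M_{jk}(q)=\sum_{i,l}\lambda^0_{ijkl}(\overline{D_i}D_l+D_i\overline{D_l})(q)$;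 $\Omega(q)=M(q)^{-1}$ if $D(q)\ne0$ and $\Omega(q)=0$ otherwise. Notation: $(a\otimes_s b)_{ij}=\frac12(a_ib_j+a_jb_i)$, $(\sigma\cdot v)_i=\sum_j\sigma_{ij}v_j$, $(\lambda:\xi)_{ij}=\sum_{kl}\lambda_{ijkl}\xi_{kl}$, overline = complex conjugation. *)

theory Defs
  imports "HOL-Analysis.Analysis"
begin

type_synonym tensor4 = "3 \<Rightarrow> 3 \<Rightarrow> 3 \<Rightarrow> 3 \<Rightarrow> real"

definition Tset :: "(real^3) set" where
  "Tset = {vector [1/2, 1/2, 1/2], vector [1/2, -1/2, -1/2],
           vector [-1/2, 1/2, -1/2], vector [-1/2, -1/2, 1/2]}"

text \<open>Strain grid S = Z^3 and displacement grid P = (1/2,1/2,1/2) + Z^3.\<close>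
definition Sgrid :: "(real^3) set" where
  "Sgrid = {r. \<forall>i. r $ i \<in> \<int>}"

definition Pgrid :: "(real^3) set" where
  "Pgrid = {r. \<forall>i. r $ i - 1/2 \<in> \<int>}"

definition period_box :: "(real^3) set \<Rightarrow> nat \<Rightarrow> nat \<Rightarrow> nat \<Rightarrow> (real^3) set" where
  "period_box G N1 N2 N3 = {r \<in> G. 0 \<le> r $ 1 \<and> r $ 1 < real N1 \<and> 0 \<le> r $ 2 \<and> r $ 2 < real N2
                                 \<and> 0 \<le> r $ 3 \<and> r $ 3 < real N3}"

definition lattice_periodic_on :: "(real^3) set \<Rightarrow> nat \<Rightarrow> nat \<Rightarrow> nat \<Rightarrow> (real^3 \<Rightarrow> 'a) \<Rightarrow> bool" where
  "lattice_periodic_on G N1 N2 N3 f \<longleftrightarrow>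
     (\<forall>r\<in>G. f (r + vector [real N1, 0, 0]) = f r \<and> f (r + vector [0, real N2, 0]) = f r
            \<and> f (r + vector [0, 0, real N3]) = f r)"

definition dft :: "(real^3) set \<Rightarrow> nat \<Rightarrow> nat \<Rightarrow> nat \<Rightarrow> (real^3 \<Rightarrow> complex) \<Rightarrow> real^3 \<Rightarrow> complex" where
  "dft G N1 N2 N3 f q = (1 / of_nat (N1 * N2 * N3)) *
      (\<Sum>r\<in>period_box G N1 N2 N3. f r * exp (- \<i> * complex_of_real (q \<bullet> r)))"

definition dft_vec :: "(real^3) set \<Rightarrow> nat \<Rightarrow> nat \<Rightarrow> nat \<Rightarrow> (real^3 \<Rightarrow> real^3) \<Rightarrow> real^3 \<Rightarrow> complex^3" where
  "dft_vec G N1 N2 N3 f q = (\<chi> i. dft G N1 N2 N3 (\<lambda>r. complex_of_real (f r $ i)) q)"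

definition dft_mat :: "(real^3) set \<Rightarrow> nat \<Rightarrow> nat \<Rightarrow> nat \<Rightarrow> (real^3 \<Rightarrow> real^3^3) \<Rightarrow> real^3 \<Rightarrow> complex^3^3" where
  "dft_mat G N1 N2 N3 f q = (\<chi> i j. dft G N1 N2 N3 (\<lambda>r. complex_of_real (f r $ i $ j)) q)"

definition QN :: "nat \<Rightarrow> nat \<Rightarrow> nat \<Rightarrow> (real^3) set" where
  "QN N1 N2 N3 = {vector [2 * pi * real h1 / real N1, 2 * pi * real h2 / real N2, 2 * pi * real h3 / real N3]
                  | h1 h2 h3. h1 < N1 \<and> h2 < N2 \<and> h3 < N3}"

definition Dq :: "real^3 \<Rightarrow> complex^3" where
  "Dq q = (\<chi> i. \<Sum>e\<in>Tset. complex_of_real (e $ i) * exp (\<i> * complex_of_real (q \<bullet> e)))"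

definition cvec :: "complex^3 \<Rightarrow> complex^3" where
  "cvec v = (\<chi> i. cnj (v $ i))"

definition Dplus :: "(real^3 \<Rightarrow> real) \<Rightarrow> real^3 \<Rightarrow> 3 \<Rightarrow> real" where
  "Dplus f r i = (\<Sum>e\<in>Tset. e $ i * f (r + e))"

definition Dminus :: "(real^3 \<Rightarrow> real) \<Rightarrow> real^3 \<Rightarrow> 3 \<Rightarrow> real" where
  "Dminus f r i = - (\<Sum>e\<in>Tset. e $ i * f (r - e))"

definition Dpm :: "nat \<Rightarrow> (real^3 \<Rightarrow> real) \<Rightarrow> real^3 \<Rightarrow> 3 \<Rightarrow> real" where
  "Dpm m = (if m = 1 then Dplus else Dminus)"

definition deps :: "nat \<Rightarrow> (real^3 \<Rightarrow> real^3) \<Rightarrow> real^3 \<Rightarrow> real^3^3" where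
  "deps m u r = (\<chi> i j. (1/2) * (Dpm m (\<lambda>p. u p $ j) r i + Dpm m (\<lambda>p. u p $ i) r j))"

definition epsm :: "nat \<Rightarrow> real^3^3 \<Rightarrow> (real^3 \<Rightarrow> real^3) \<Rightarrow> real^3 \<Rightarrow> real^3^3" where
  "epsm m ebar u r = ebar + deps m u r"

definition contr :: "(3 \<Rightarrow> 3 \<Rightarrow> 3 \<Rightarrow> 3 \<Rightarrow> 'a::comm_semiring_1) \<Rightarrow> 'a^3^3 \<Rightarrow> 'a^3^3" where
  "contr L xi = (\<chi> i j. \<Sum>k\<in>UNIV. \<Sum>l\<in>UNIV. L i j k l * xi $ k $ l)"

definition ctensor :: "tensor4 \<Rightarrow> (3 \<Rightarrow> 3 \<Rightarrow> 3 \<Rightarrow> 3 \<Rightarrow> complex)" where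
  "ctensor L = (\<lambda>i j k l. complex_of_real (L i j k l))"

definition sigm :: "nat \<Rightarrow> (real^3 \<Rightarrow> tensor4) \<Rightarrow> (real^3 \<Rightarrow> real^3^3) \<Rightarrow> real^3^3
                    \<Rightarrow> (real^3 \<Rightarrow> real^3) \<Rightarrow> real^3 \<Rightarrow> real^3^3" where
  "sigm m lam eps0 ebar u r = contr (lam r) (epsm m ebar u r - eps0 r)"

definition taum :: "nat \<Rightarrow> (real^3 \<Rightarrow> tensor4) \<Rightarrow> tensor4 \<Rightarrow> (real^3 \<Rightarrow> real^3^3) \<Rightarrow> real^3^3
                    \<Rightarrow> (real^3 \<Rightarrow> real^3) \<Rightarrow> real^3 \<Rightarrow> real^3^3" where
  "taum m lam lam0 eps0 ebar u r = sigm m lam eps0 ebar u r - contr lam0 (epsm m ebar u r)"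

definition Mq :: "tensor4 \<Rightarrow> real^3 \<Rightarrow> complex^3^3" where
  "Mq lam0 q = (\<chi> j k. \<Sum>i\<in>UNIV. \<Sum>l\<in>UNIV. complex_of_real (lam0 i j k l) *
       (cnj (Dq q $ i) * Dq q $ l + Dq q $ i * cnj (Dq q $ l)))"

definition Omega :: "tensor4 \<Rightarrow> real^3 \<Rightarrow> complex^3^3" where
  "Omega lam0 q = (if Dq q \<noteq> 0 then matrix_inv (Mq lam0 q) else 0)"

definition symprod :: "complex^3 \<Rightarrow> complex^3 \<Rightarrow> complex^3^3" where
  "symprod a b = (\<chi> i j. (a $ i * b $ j + a $ j * b $ i) / 2)"

definition minor_major_sym :: "tensor4 \<Rightarrow> bool" where
  "minor_major_sym L \<longleftrightarrow> (\<forall>i j k l. L i j k l = L j i k l \<and> L i j k l = L i j l k \<and> L i j k l = L k l i j)"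

definition pos_def_sym :: "tensor4 \<Rightarrow> bool" where
  "pos_def_sym L \<longleftrightarrow> (\<forall>xi::real^3^3. transpose xi = xi \<and> xi \<noteq> 0 \<longrightarrow>
      (\<Sum>i\<in>UNIV. \<Sum>j\<in>UNIV. \<Sum>k\<in>UNIV. \<Sum>l\<in>UNIV. xi $ i $ j * L i j k l * xi $ k $ l) > 0)"

end

theory Submission
  imports Defs
begin


definition Mg :: "(3 \<Rightarrow> 3 \<Rightarrow> 3 \<Rightarrow> 3 \<Rightarrow> complex) \<Rightarrow> complex^3 \<Rightarrow> complex^3^3" where
  "Mg L a = (\<chi> j k. \<Sum>i\<in>UNIV. \<Sum>l\<in>UNIV. L i j k l * (cnj (a $ i) * a $ l + a $ i * cnj (a $ l)))"

lemma Mq_Mg: "Mq lam0 q = Mg (ctensor lam0) (Dq q)"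
  by (simp add: Mq_def Mg_def ctensor_def)

lemma contr_symprod:
  fixes L :: "3 \<Rightarrow> 3 \<Rightarrow> 3 \<Rightarrow> 3 \<Rightarrow> complex"
  assumes "\<forall>i j k l. L i j k l = L i j l k"
  shows "contr L (symprod a v) $ j $ i = (\<Sum>k\<in>UNIV. \<Sum>l\<in>UNIV. L j i k l * (a$k * v$l))"
proof -
  have "contr L (symprod a v) $ j $ i = (\<Sum>k\<in>UNIV. \<Sum>l\<in>UNIV. L j i k l * (a$k * v$l)) / 2
        + (\<Sum>k\<in>UNIV. \<Sum>l\<in>UNIV. L j i k l * (a$l * v$k)) / 2"
    by (simp add: contr_def symprod_def sum_divide_distrib algebra_simps sum.distrib add_divide_distrib)
  also have "(\<Sum>k\<in>UNIV. \<Sum>l\<in>UNIV. L j i k l * (a$l * v$k)) = (\<Sum>k\<in>UNIV. \<Sum>l\<in>UNIV. L j i k l * (a$k * v$l))"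
    by (subst sum.swap) (simp add: assms[rule_format, of j i])
  finally show ?thesis by simp
qed

lemma mv_contr: "(contr L X *v w) $ j = (\<Sum>i\<in>UNIV. (\<Sum>k\<in>UNIV. \<Sum>l\<in>UNIV. L j i k l * X$k$l) * w$i)"
  by (simp add: contr_def matrix_vector_mult_def)

lemma Mg_identity:
  fixes L :: "3 \<Rightarrow> 3 \<Rightarrow> 3 \<Rightarrow> 3 \<Rightarrow> complex"
  assumes s1: "\<forall>i j k l. L i j k l = L j i k l" and s2: "\<forall>i j k l. L i j k l = L i j l k"
  shows "Mg L a *v v = contr L (symprod a v) *v cvec a + contr L (symprod (cvec a) v) *v a"
proof -
  have "(Mg L a *v v) $ j = (contr L (symprod a v) *v cvec a + contr L (symprod (cvec a) v) *v a) $ j" for j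
  proof -
    have lhs: "(Mg L a *v v) $ j = (\<Sum>k\<in>UNIV. \<Sum>i\<in>UNIV. \<Sum>l\<in>UNIV. L i j k l * cnj (a $ i) * a $ l * v$k)
        + (\<Sum>k\<in>UNIV. \<Sum>i\<in>UNIV. \<Sum>l\<in>UNIV. L i j k l * a $ i * cnj (a $ l) * v$k)"
      by (simp add: Mg_def matrix_vector_mult_def sum_distrib_right sum_distrib_left sum.distrib algebra_simps)
    have r1: "(contr L (symprod a v) *v cvec a) $ j = (\<Sum>k\<in>UNIV. \<Sum>i\<in>UNIV. \<Sum>l\<in>UNIV. L i j k l * cnj (a $ i) * a $ l * v$k)"
    proof -
      have "(contr L (symprod a v) *v cvec a) $ j = (\<Sum>i\<in>UNIV. \<Sum>k\<in>UNIV. \<Sum>l\<in>UNIV. L j i k l * (a$k * v$l) * cnj (a$i))"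
        by (simp add: matrix_vector_mult_def contr_symprod[OF s2] cvec_def sum_distrib_right)
      also have "\<dots> = (\<Sum>i\<in>UNIV. \<Sum>k\<in>UNIV. \<Sum>l\<in>UNIV. L i j k l * cnj (a $ i) * a $ k * v$l)"
        by (simp add: s1[rule_format, of j] algebra_simps)
      also have "\<dots> = (\<Sum>i\<in>UNIV. \<Sum>l\<in>UNIV. \<Sum>k\<in>UNIV. L i j k l * cnj (a $ i) * a $ l * v$k)"
        apply (intro sum.cong refl)
        apply (metis s2)
        done
      also have "\<dots> = (\<Sum>k\<in>UNIV. \<Sum>i\<in>UNIV. \<Sum>l\<in>UNIV. L i j k l * cnj (a $ i) * a $ l * v$k)"
        by (rule trans[OF sum.cong[OF refl sum.swap] sum.swap])
      finally show ?thesis .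
    qed
    have r2: "(contr L (symprod (cvec a) v) *v a) $ j = (\<Sum>k\<in>UNIV. \<Sum>i\<in>UNIV. \<Sum>l\<in>UNIV. L i j k l * a $ i * cnj (a $ l) * v$k)"
    proof -
      have "(contr L (symprod (cvec a) v) *v a) $ j = (\<Sum>i\<in>UNIV. \<Sum>k\<in>UNIV. \<Sum>l\<in>UNIV. L j i k l * (cnj (a$k) * v$l) * a$i)"
        by (simp add: matrix_vector_mult_def contr_symprod[OF s2] cvec_def sum_distrib_right)
      also have "\<dots> = (\<Sum>i\<in>UNIV. \<Sum>k\<in>UNIV. \<Sum>l\<in>UNIV. L i j k l * a $ i * cnj (a $ k) * v$l)"
        by (simp add: s1[rule_format, of j] algebra_simps)
      also have "\<dots> = (\<Sum>i\<in>UNIV. \<Sum>l\<in>UNIV. \<Sum>k\<in>UNIV. L i j k l * a $ i * cnj (a $ l) * v$k)"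
        apply (intro sum.cong refl)
        apply (metis s2)
        done
      also have "\<dots> = (\<Sum>k\<in>UNIV. \<Sum>i\<in>UNIV. \<Sum>l\<in>UNIV. L i j k l * a $ i * cnj (a $ l) * v$k)"
        by (rule trans[OF sum.cong[OF refl sum.swap] sum.swap])
      finally show ?thesis .
    qed
    show ?thesis using lhs r1 r2 by simp
  qed
  then show ?thesis by (simp add: vec_eq_iff)
qed

definition Hf :: "(3 \<Rightarrow> 3 \<Rightarrow> 3 \<Rightarrow> 3 \<Rightarrow> complex) \<Rightarrow> complex^3^3 \<Rightarrow> complex" where
  "Hf L Y = (\<Sum>j\<in>UNIV. \<Sum>i\<in>UNIV. \<Sum>k\<in>UNIV. \<Sum>l\<in>UNIV. L j i k l * cnj (Y$j$i) * Y$k$l)"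

definition Bf :: "tensor4 \<Rightarrow> real^3^3 \<Rightarrow> real^3^3 \<Rightarrow> real" where
  "Bf L X Y = (\<Sum>i\<in>UNIV. \<Sum>j\<in>UNIV. \<Sum>k\<in>UNIV. \<Sum>l\<in>UNIV. X$i$j * L i j k l * Y$k$l)"

lemma quad:
  fixes L :: "3 \<Rightarrow> 3 \<Rightarrow> 3 \<Rightarrow> 3 \<Rightarrow> complex"
  assumes s1: "\<forall>i j k l. L i j k l = L j i k l"
  shows "(\<Sum>j\<in>UNIV. cnj (w$j) * (contr L (symprod c w) *v cvec c)$j) = Hf L (symprod c w)"
proof -
  let ?X = "symprod c w"
  have "Hf L ?X = (\<Sum>j\<in>UNIV. \<Sum>i\<in>UNIV. \<Sum>k\<in>UNIV. \<Sum>l\<in>UNIV. L j i k l * (cnj (c$j) * cnj (w$i)) * ?X$k$l) / 2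
     + (\<Sum>j\<in>UNIV. \<Sum>i\<in>UNIV. \<Sum>k\<in>UNIV. \<Sum>l\<in>UNIV. L j i k l * (cnj (c$i) * cnj (w$j)) * ?X$k$l) / 2"
    unfolding Hf_def sum_divide_distrib add_divide_distrib sum.distrib[symmetric]
    by (intro sum.cong refl) (simp add: symprod_def algebra_simps add_divide_distrib)
  also have "(\<Sum>j\<in>UNIV. \<Sum>i\<in>UNIV. \<Sum>k\<in>UNIV. \<Sum>l\<in>UNIV. L j i k l * (cnj (c$j) * cnj (w$i)) * ?X$k$l)
     = (\<Sum>j\<in>UNIV. \<Sum>i\<in>UNIV. \<Sum>k\<in>UNIV. \<Sum>l\<in>UNIV. L j i k l * (cnj (c$i) * cnj (w$j)) * ?X$k$l)"
    apply (rule sum.swap[THEN trans])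
    apply (intro sum.cong refl)
    apply (metis s1)
    done
  finally have H: "Hf L ?X = (\<Sum>j\<in>UNIV. \<Sum>i\<in>UNIV. \<Sum>k\<in>UNIV. \<Sum>l\<in>UNIV. L j i k l * (cnj (c$i) * cnj (w$j)) * ?X$k$l)"
    by simp
  show ?thesis unfolding H
    by (simp add: matrix_vector_mult_def contr_def cvec_def sum_distrib_left sum_distrib_right algebra_simps)
qed

lemma pairsum: "(\<Sum>i\<in>(UNIV::'a::finite set). \<Sum>j\<in>(UNIV::'b::finite set). f i j) = (\<Sum>p\<in>UNIV\<times>UNIV. f (fst p) (snd p))"
  by (simp add: sum.cartesian_product split_def)

lemma Bf_sym:
  assumes "minor_major_sym L"
  shows "Bf L X Y = Bf L Y X"
proof -
  have m: "L i j k l = L k l i j" for i j k l using assms unfolding minor_major_sym_def by blast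
  have "Bf L X Y = (\<Sum>p\<in>UNIV\<times>UNIV. \<Sum>r\<in>UNIV\<times>UNIV. X$fst p$snd p * L (fst p) (snd p) (fst r) (snd r) * Y$fst r$snd r)"
    unfolding Bf_def by (simp only: pairsum)
  also have "\<dots> = (\<Sum>r\<in>UNIV\<times>UNIV. \<Sum>p\<in>UNIV\<times>UNIV. X$fst p$snd p * L (fst p) (snd p) (fst r) (snd r) * Y$fst r$snd r)"
    by (rule sum.swap)
  also have "\<dots> = (\<Sum>r\<in>UNIV\<times>UNIV. \<Sum>p\<in>UNIV\<times>UNIV. Y$fst r$snd r * L (fst r) (snd r) (fst p) (snd p) * X$fst p$snd p)"
  proof (intro sum.cong refl)
    fix r p :: "3 \<times> 3"
    show "X$fst p$snd p * L (fst p) (snd p) (fst r) (snd r) * Y$fst r$snd r = Y$fst r$snd r * L (fst r) (snd r) (fst p) (snd p) * X$fst p$snd p"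
      using m[of "fst p" "snd p" "fst r" "snd r"] by simp
  qed
  also have "\<dots> = Bf L Y X"
    unfolding Bf_def by (simp only: pairsum)
  finally show ?thesis .
qed

definition reM :: "complex^3^3 \<Rightarrow> real^3^3" where "reM Y = (\<chi> i j. Re (Y$i$j))"
definition imM :: "complex^3^3 \<Rightarrow> real^3^3" where "imM Y = (\<chi> i j. Im (Y$i$j))"

lemma Hf_real:
  assumes "minor_major_sym L"
  shows "Hf (ctensor L) Y = complex_of_real (Bf L (reM Y) (reM Y) + Bf L (imM Y) (imM Y))"
proof -
  have Re: "Re (Hf (ctensor L) Y) = Bf L (reM Y) (reM Y) + Bf L (imM Y) (imM Y)"
    unfolding Hf_def Bf_def ctensor_def reM_def imM_def
    by (simp add: Re_sum sum.distrib[symmetric] algebra_simps)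
  have "Im (Hf (ctensor L) Y) = Bf L (reM Y) (imM Y) - Bf L (imM Y) (reM Y)"
    unfolding Hf_def Bf_def ctensor_def reM_def imM_def
    by (simp add: Im_sum sum_subtractf[symmetric] algebra_simps)
  also have "\<dots> = 0" using Bf_sym[OF assms] by simp
  finally show ?thesis using Re by (simp add: complex_eq_iff)
qed

lemma Bf_nonneg:
  assumes "pos_def_sym L" "transpose R = R"
  shows "Bf L R R \<ge> 0" and "Bf L R R = 0 \<Longrightarrow> R = 0"
proof -
  have *: "R \<noteq> 0 \<Longrightarrow> Bf L R R > 0" using assms unfolding pos_def_sym_def Bf_def by blast
  show "Bf L R R \<ge> 0"
  proof (cases "R = 0")
    case True then show ?thesis by (simp add: Bf_def)
  next
    case False then show ?thesis using * by simp
  qed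
  show "Bf L R R = 0 \<Longrightarrow> R = 0" using * by force
qed

lemma transpose_reM: "(\<forall>i j. Y$i$j = Y$j$i) \<Longrightarrow> transpose (reM Y) = reM Y"
  by (simp add: transpose_def reM_def vec_eq_iff)
lemma transpose_imM: "(\<forall>i j. Y$i$j = Y$j$i) \<Longrightarrow> transpose (imM Y) = imM Y"
  by (simp add: transpose_def imM_def vec_eq_iff)
lemma symprod_sym: "\<forall>i j. symprod a w $i$j = symprod a w $j$i"
  by (simp add: symprod_def add.commute)

lemma reim_zero: "reM Y = 0 \<Longrightarrow> imM Y = 0 \<Longrightarrow> Y = 0"
  by (simp add: reM_def imM_def vec_eq_iff complex_eq_iff)

lemma symprod_zero: assumes "symprod a w = 0" "a \<noteq> 0" shows "w = 0"
proof -
  obtain m where m: "a$m \<noteq> 0" using assms(2) by (auto simp: vec_eq_iff)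
  have "symprod a w $ m $ m = 0" using assms(1) by simp
  then have wm: "w$m = 0" using m by (simp add: symprod_def)
  have "w$j = 0" for j
  proof -
    have "symprod a w $ m $ j = 0" using assms(1) by simp
    then show ?thesis using m wm by (simp add: symprod_def)
  qed
  then show ?thesis by (simp add: vec_eq_iff)
qed

lemma ctensor_minor: "minor_major_sym L \<Longrightarrow> \<forall>i j k l. ctensor L i j k l = ctensor L j i k l"
  by (simp add: ctensor_def minor_major_sym_def)
lemma ctensor_minor2: "minor_major_sym L \<Longrightarrow> \<forall>i j k l. ctensor L i j k l = ctensor L i j l k"
  by (simp add: ctensor_def minor_major_sym_def)

lemma cvec_cvec[simp]: "cvec (cvec a) = a" by (simp add: cvec_def vec_eq_iff)

lemma Hf_zero:
  assumes ms: "minor_major_sym L" and pd: "pos_def_sym L" and a: "a \<noteq> 0"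
    and H: "Hf (ctensor L) (symprod a w) + Hf (ctensor L) (symprod b w) = 0"
  shows "w = 0"
proof -
  let ?X = "symprod a w" and ?Y = "symprod b w"
  note s = Bf_nonneg[OF pd transpose_reM[OF symprod_sym]] Bf_nonneg[OF pd transpose_imM[OF symprod_sym]]
  have "Bf L (reM ?X) (reM ?X) + Bf L (imM ?X) (imM ?X) + (Bf L (reM ?Y) (reM ?Y) + Bf L (imM ?Y) (imM ?Y)) = 0"
    using H unfolding Hf_real[OF ms] by (metis of_real_add of_real_eq_0_iff)
  then have "Bf L (reM ?X) (reM ?X) = 0" "Bf L (imM ?X) (imM ?X) = 0"
    using s[of a w] s[of b w] by linarith+
  then have "?X = 0" using s[of a w] reim_zero by blast
  then show ?thesis using symprod_zero a by blast
qed

lemma Mg_inj: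
  assumes ms: "minor_major_sym L" and pd: "pos_def_sym L" and a: "a \<noteq> 0"
    and w: "Mg (ctensor L) a *v w = 0"
  shows "w = 0"
proof -
  have "0 = (\<Sum>j\<in>UNIV. cnj (w$j) * (Mg (ctensor L) a *v w)$j)" using w by simp
  also have "\<dots> = (\<Sum>j\<in>UNIV. cnj (w$j) * (contr (ctensor L) (symprod a w) *v cvec a)$j)
      + (\<Sum>j\<in>UNIV. cnj (w$j) * (contr (ctensor L) (symprod (cvec a) w) *v cvec (cvec a))$j)"
    unfolding Mg_identity[OF ctensor_minor[OF ms] ctensor_minor2[OF ms]]
    by (simp add: sum.distrib algebra_simps)
  also have "\<dots> = Hf (ctensor L) (symprod a w) + Hf (ctensor L) (symprod (cvec a) w)"
    by (simp only: quad[OF ctensor_minor[OF ms]])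
  finally show ?thesis using Hf_zero[OF ms pd a] by simp
qed

lemma Mg_inv:
  assumes ms: "minor_major_sym L" and pd: "pos_def_sym L" and a: "a \<noteq> 0"
  shows "matrix_inv (Mg (ctensor L) a) *v (Mg (ctensor L) a *v v) = v"
proof -
  let ?M = "Mg (ctensor L) a"
  have "\<exists>B. B ** ?M = mat 1" unfolding matrix_left_invertible_ker using Mg_inj[OF ms pd a] by blast
  then have "invertible ?M" using invertible_left_inverse by blast
  then have "?M ** matrix_inv ?M = mat 1 \<and> matrix_inv ?M ** ?M = mat 1"
    unfolding invertible_def matrix_inv_def by (rule someI_ex)
  then show ?thesis by (metis matrix_vector_mul_assoc matrix_vector_mul_lid)
qed




abbreviation "e1 \<equiv> (vector [1/2, 1/2, 1/2] :: real^3)"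
abbreviation "e2 \<equiv> (vector [1/2, -1/2, -1/2] :: real^3)"
abbreviation "e3 \<equiv> (vector [-1/2, 1/2, -1/2] :: real^3)"
abbreviation "e4 \<equiv> (vector [-1/2, -1/2, 1/2] :: real^3)"

lemma Tset_sum: "(\<Sum>e\<in>Tset. f e) = f e1 + f e2 + f e3 + f e4"
  unfolding Tset_def by (simp add: vec_eq_iff forall_3 vector_3 add.assoc)

lemma inner3: "(x::real^3) \<bullet> y = x$1*y$1 + x$2*y$2 + x$3*y$3"
  by (simp add: inner_vec_def sum_3)

lemma Dq_expl:
  fixes q :: "real^3"
  defines "z1 \<equiv> exp (\<i> * complex_of_real (q \<bullet> e1))"
    and "z2 \<equiv> exp (\<i> * complex_of_real (q \<bullet> e2))"
    and "z3 \<equiv> exp (\<i> * complex_of_real (q \<bullet> e3))"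
    and "z4 \<equiv> exp (\<i> * complex_of_real (q \<bullet> e4))"
  shows "Dq q $ 1 = (z1 + z2 - z3 - z4)/2" "Dq q $ 2 = (z1 - z2 + z3 - z4)/2" "Dq q $ 3 = (z1 - z2 - z3 + z4)/2"
  unfolding Dq_def z1_def z2_def z3_def z4_def
  by (simp_all add: Tset_sum vector_3 diff_divide_distrib add_divide_distrib)

lemma inner_e:
  "q \<bullet> e1 = (q$1+q$2+q$3)/2" "q \<bullet> e2 = (q$1-q$2-q$3)/2"
  "q \<bullet> e3 = (-q$1+q$2-q$3)/2" "q \<bullet> e4 = (-q$1-q$2+q$3)/2"
  by (simp_all add: inner3 vector_3 field_simps)

lemma exp_ii_eq: "exp (\<i> * complex_of_real a) = exp (\<i> * complex_of_real b) \<Longrightarrow> \<exists>n::int. a = b + 2 * pi * of_int n"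
proof -
  assume "exp (\<i> * complex_of_real a) = exp (\<i> * complex_of_real b)"
  then obtain n :: int where "\<i> * complex_of_real a = \<i> * complex_of_real b + (of_int (2 * n) * pi) * \<i>"
    using exp_eq by blast
  then have "Im (\<i> * complex_of_real a) = Im (\<i> * complex_of_real b + (of_int (2 * n) * pi) * \<i>)" by simp
  then have "a = b + 2 * pi * of_int n" by simp
  then show ?thesis by blast
qed

lemma QN_elem:
  assumes "q \<in> QN N1 N2 N3"
  shows "\<exists>h1 h2 h3. h1 < N1 \<and> h2 < N2 \<and> h3 < N3 \<and> q$1 = 2 * pi * real h1 / real N1 \<and>
          q$2 = 2 * pi * real h2 / real N2 \<and> q$3 = 2 * pi * real h3 / real N3"
  using assms unfolding QN_def by (auto simp: vector_3)

lemma frac_bound: "h < N \<Longrightarrow> 0 \<le> 2 * pi * real h / real N \<and> 2 * pi * real h / real N < 2 * pi"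
proof -
  assume h: "h < N"
  then have N: "real N > 0" by simp
  have "2 * pi * real h < 2 * pi * real N" using h pi_gt_zero by simp
  then show ?thesis using N by (simp add: divide_less_eq)
qed

lemma QN_bounds:
  assumes "q \<in> QN N1 N2 N3"
  shows "0 \<le> q$1 \<and> q$1 < 2*pi" "0 \<le> q$2 \<and> q$2 < 2*pi" "0 \<le> q$3 \<and> q$3 < 2*pi"
  using QN_elem[OF assms] frac_bound by metis+

lemma int01: "(m::int) \<in> {0,1}" if "0 \<le> pi * of_int m" "pi * of_int m < 2 * pi"
proof -
  have "0 \<le> (of_int m::real)" using that(1) pi_gt_zero by (simp add: zero_le_mult_iff)
  moreover have "(of_int m::real) < 2" using that(2) pi_gt_zero by simp
  ultimately have "0 \<le> m" "m < 2" by linarith+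
  then show ?thesis by auto
qed

lemma Dq_zero:
  assumes q: "q \<in> QN N1 N2 N3" and D: "Dq q = 0"
  shows "q = 0 \<or> q = vector [pi, pi, pi]"
proof -
  define z1 where "z1 \<equiv> exp (\<i> * complex_of_real (q \<bullet> e1))"
  define z2 where "z2 \<equiv> exp (\<i> * complex_of_real (q \<bullet> e2))"
  define z3 where "z3 \<equiv> exp (\<i> * complex_of_real (q \<bullet> e3))"
  define z4 where "z4 \<equiv> exp (\<i> * complex_of_real (q \<bullet> e4))"
  have a: "z1+z2-z3-z4 = 0" using Dq_expl(1)[of q] D unfolding z1_def z2_def z3_def z4_def by simp
  have b: "z1-z2+z3-z4 = 0" using Dq_expl(2)[of q] D unfolding z1_def z2_def z3_def z4_def by simp
  have c: "z1-z2-z3+z4 = 0" using Dq_expl(3)[of q] D unfolding z1_def z2_def z3_def z4_def by simp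
  have "(z1+z2-z3-z4) + (z1-z2+z3-z4) = 0" using a b by simp
  then have "2*(z1-z4) = 0" by (simp add: algebra_simps)
  then have z14: "z1 = z4" by simp
  have "(z1+z2-z3-z4) + (z1-z2-z3+z4) = 0" using a c by simp
  then have "2*(z1-z3) = 0" by (simp add: algebra_simps)
  then have z13: "z1 = z3" by simp
  have z12: "z1 = z2" using a z13 z14 by simp
  obtain n1 :: int where n1: "q \<bullet> e1 = q \<bullet> e2 + 2 * pi * of_int n1" using exp_ii_eq z12 unfolding z1_def z2_def by blast
  obtain n2 :: int where n2: "q \<bullet> e1 = q \<bullet> e3 + 2 * pi * of_int n2" using exp_ii_eq z13 unfolding z1_def z3_def by blast
  obtain n3 :: int where n3: "q \<bullet> e1 = q \<bullet> e4 + 2 * pi * of_int n3" using exp_ii_eq z14 unfolding z1_def z4_def by blast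
  define m1 where "m1 = n2 + n3 - n1"
  define m2 where "m2 = n1 + n3 - n2"
  define m3 where "m3 = n1 + n2 - n3"
  have "q$1 = pi * of_int n2 + pi * of_int n3 - pi * of_int n1" using n1 n2 n3 unfolding inner_e mult.assoc by argo
  then have q1: "q$1 = pi * of_int m1" unfolding m1_def by (simp add: algebra_simps)
  have "q$2 = pi * of_int n1 + pi * of_int n3 - pi * of_int n2" using n1 n2 n3 unfolding inner_e mult.assoc by argo
  then have q2: "q$2 = pi * of_int m2" unfolding m2_def by (simp add: algebra_simps)
  have "q$3 = pi * of_int n1 + pi * of_int n2 - pi * of_int n3" using n1 n2 n3 unfolding inner_e mult.assoc by argo
  then have q3: "q$3 = pi * of_int m3" unfolding m3_def by (simp add: algebra_simps)
  have "m1 \<in> {0,1}" using int01 QN_bounds(1)[OF q] q1 by simp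
  moreover have "m2 \<in> {0,1}" using int01 QN_bounds(2)[OF q] q2 by simp
  moreover have "m3 \<in> {0,1}" using int01 QN_bounds(3)[OF q] q3 by simp
  moreover have "m1 + m2 = 2 * n3" "m1 + m3 = 2 * n2" unfolding m1_def m2_def m3_def by simp_all
  ultimately have "(m1 = 0 \<and> m2 = 0 \<and> m3 = 0) \<or> (m1 = 1 \<and> m2 = 1 \<and> m3 = 1)" by auto presburger+
  then show ?thesis using q1 q2 q3 by (auto simp: vec_eq_iff forall_3 vector_3)
qed




definition intv :: "real^3 \<Rightarrow> bool" where "intv z \<longleftrightarrow> (\<forall>i. z$i \<in> \<int>)"

definition gclosed :: "(real^3) set \<Rightarrow> bool" where
  "gclosed G \<longleftrightarrow> (\<forall>x\<in>G. \<forall>z. intv z \<longrightarrow> x + z \<in> G)"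

lemma intv_minus: "intv z \<Longrightarrow> intv (-z)" by (simp add: intv_def)
lemma intv_add: "intv z \<Longrightarrow> intv w \<Longrightarrow> intv (z + w)" by (simp add: intv_def)
lemma intv_scale: "intv z \<Longrightarrow> intv (of_int m *\<^sub>R z)" by (simp add: intv_def)

lemma gclosed_S: "gclosed Sgrid" unfolding gclosed_def Sgrid_def intv_def by auto
lemma gclosed_P: "gclosed Pgrid"
proof -
  have "(x$i + z$i) - 1/2 \<in> \<int>" if "x$i - 1/2 \<in> \<int>" "z$i \<in> \<int>" for x z :: "real^3" and i
  proof -
    have "(x$i + z$i) - 1/2 = (x$i - 1/2) + z$i" by simp
    then show ?thesis using that by (metis Ints_add)
  qed
  then show ?thesis unfolding gclosed_def Pgrid_def intv_def by auto
qed

lemma gclosed_diff: "gclosed G \<Longrightarrow> x \<in> G \<Longrightarrow> intv z \<Longrightarrow> x - z \<in> G"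
  unfolding gclosed_def using intv_minus by (metis diff_conv_add_uminus)

lemma per_d:
  assumes cl: "gclosed G" and d: "intv d" and per: "\<forall>y\<in>G. g (y + d) = g y" and x: "x \<in> G"
  shows "g (x + of_int m *\<^sub>R d) = g x"
proof (induction m rule: int_induct[where k=0])
  case base then show ?case by simp
next
  case (step1 i)
  have "x + of_int i *\<^sub>R d \<in> G" using cl x intv_scale[OF d] unfolding gclosed_def by blast
  then have "g (x + of_int i *\<^sub>R d + d) = g (x + of_int i *\<^sub>R d)" using per by blast
  moreover have eq: "x + of_int (i+1) *\<^sub>R d = x + of_int i *\<^sub>R d + d" by (simp add: algebra_simps)
  ultimately show ?case using step1 unfolding eq by simp
next
  case (step2 i)
  have "x + of_int (i - 1) *\<^sub>R d \<in> G" using cl x intv_scale[OF d] unfolding gclosed_def by blast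
  then have "g (x + of_int (i - 1) *\<^sub>R d + d) = g (x + of_int (i - 1) *\<^sub>R d)" using per by blast
  moreover have eq: "x + of_int i *\<^sub>R d = x + of_int (i - 1) *\<^sub>R d + d" by (simp add: algebra_simps)
  ultimately show ?case using step2 unfolding eq by simp
qed

abbreviation "d1 N1 \<equiv> (vector [real N1, 0, 0] :: real^3)"
abbreviation "d2 N2 \<equiv> (vector [0, real N2, 0] :: real^3)"
abbreviation "d3 N3 \<equiv> (vector [0, 0, real N3] :: real^3)"

lemma intv_d: "intv (d1 N1)" "intv (d2 N2)" "intv (d3 N3)"
  by (auto simp: intv_def forall_3 vector_3)

lemma per3:
  assumes cl: "gclosed G" and per: "lattice_periodic_on G N1 N2 N3 g" and x: "x \<in> G"
  shows "g (x + of_int m1 *\<^sub>R d1 N1 + of_int m2 *\<^sub>R d2 N2 + of_int m3 *\<^sub>R d3 N3) = g x"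
proof -
  have p1: "\<forall>y\<in>G. g (y + d1 N1) = g y" and p2: "\<forall>y\<in>G. g (y + d2 N2) = g y" and p3: "\<forall>y\<in>G. g (y + d3 N3) = g y"
    using per unfolding lattice_periodic_on_def by auto
  have x1: "x + of_int m1 *\<^sub>R d1 N1 \<in> G" using cl x intv_scale[OF intv_d(1)] unfolding gclosed_def by blast
  have x2: "x + of_int m1 *\<^sub>R d1 N1 + of_int m2 *\<^sub>R d2 N2 \<in> G" using cl x1 intv_scale[OF intv_d(2)] unfolding gclosed_def by blast
  have "g (x + of_int m1 *\<^sub>R d1 N1 + of_int m2 *\<^sub>R d2 N2 + of_int m3 *\<^sub>R d3 N3) = g (x + of_int m1 *\<^sub>R d1 N1 + of_int m2 *\<^sub>R d2 N2)"
    by (rule per_d[OF cl intv_d(3) p3 x2])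
  also have "\<dots> = g (x + of_int m1 *\<^sub>R d1 N1)" by (rule per_d[OF cl intv_d(2) p2 x1])
  also have "\<dots> = g x" by (rule per_d[OF cl intv_d(1) p1 x])
  finally show ?thesis .
qed

definition W :: "nat \<Rightarrow> nat \<Rightarrow> nat \<Rightarrow> real^3 \<Rightarrow> real^3" where
  "W N1 N2 N3 x = x + of_int (- \<lfloor>x$1 / real N1\<rfloor>) *\<^sub>R d1 N1 + of_int (- \<lfloor>x$2 / real N2\<rfloor>) *\<^sub>R d2 N2
        + of_int (- \<lfloor>x$3 / real N3\<rfloor>) *\<^sub>R d3 N3"

lemma W_comp: "W N1 N2 N3 x $ 1 = x$1 - real N1 * \<lfloor>x$1 / real N1\<rfloor>"
   "W N1 N2 N3 x $ 2 = x$2 - real N2 * \<lfloor>x$2 / real N2\<rfloor>"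
   "W N1 N2 N3 x $ 3 = x$3 - real N3 * \<lfloor>x$3 / real N3\<rfloor>"
  by (simp_all add: W_def vector_3)

lemma wr_bounds: "0 < n \<Longrightarrow> 0 \<le> t - real n * \<lfloor>t / real n\<rfloor> \<and> t - real n * \<lfloor>t / real n\<rfloor> < real n"
proof -
  assume n: "0 < n"
  have "of_int \<lfloor>t / real n\<rfloor> \<le> t / real n" "t / real n < of_int \<lfloor>t / real n\<rfloor> + 1" by linarith+
  then have "real n * of_int \<lfloor>t / real n\<rfloor> \<le> real n * (t / real n)" "real n * (t / real n) < real n * (of_int \<lfloor>t / real n\<rfloor> + 1)"
    using n by (simp_all only: mult_left_mono mult_strict_left_mono of_nat_0_less_iff of_nat_0_le_iff)
  moreover have "real n * (t / real n) = t" using n by simp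
  ultimately have "real n * of_int \<lfloor>t / real n\<rfloor> \<le> t" "t < real n * (of_int \<lfloor>t / real n\<rfloor> + 1)" by simp_all
  moreover have "real n * (of_int \<lfloor>t / real n\<rfloor> + 1) = real n * of_int \<lfloor>t / real n\<rfloor> + real n"
    by (simp add: distrib_left)
  ultimately show ?thesis by linarith
qed

lemma wr_id: "0 \<le> t \<Longrightarrow> t < real n \<Longrightarrow> \<lfloor>t / real n\<rfloor> = 0"
  by (simp add: floor_eq_iff)

lemma wr_shift: "0 < n \<Longrightarrow> \<lfloor>(t + real n * of_int m) / real n\<rfloor> = \<lfloor>t / real n\<rfloor> + m"
proof -
  assume "0 < n"
  then have "(t + real n * of_int m) / real n = t / real n + of_int m" by (simp add: field_simps)
  then show ?thesis by simp
qed

lemma W_period: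
  assumes N: "0<N1" "0<N2" "0<N3"
  shows "W N1 N2 N3 (x + of_int k1 *\<^sub>R d1 N1 + of_int k2 *\<^sub>R d2 N2 + of_int k3 *\<^sub>R d3 N3) = W N1 N2 N3 x"
proof -
  have c: "(x + of_int k1 *\<^sub>R d1 N1 + of_int k2 *\<^sub>R d2 N2 + of_int k3 *\<^sub>R d3 N3) $ 1 = x$1 + real N1 * of_int k1"
          "(x + of_int k1 *\<^sub>R d1 N1 + of_int k2 *\<^sub>R d2 N2 + of_int k3 *\<^sub>R d3 N3) $ 2 = x$2 + real N2 * of_int k2"
          "(x + of_int k1 *\<^sub>R d1 N1 + of_int k2 *\<^sub>R d2 N2 + of_int k3 *\<^sub>R d3 N3) $ 3 = x$3 + real N3 * of_int k3"
    by (simp_all add: vector_3 mult.commute)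
  show ?thesis unfolding vec_eq_iff forall_3 W_comp c wr_shift[OF N(1)] wr_shift[OF N(2)] wr_shift[OF N(3)]
    by (simp add: algebra_simps)
qed

lemma W_in_G: "gclosed G \<Longrightarrow> x \<in> G \<Longrightarrow> W N1 N2 N3 x \<in> G"
proof -
  assume cl: "gclosed G" and x: "x \<in> G"
  have "intv (of_int (- \<lfloor>x$1 / real N1\<rfloor>) *\<^sub>R d1 N1 + of_int (- \<lfloor>x$2 / real N2\<rfloor>) *\<^sub>R d2 N2
        + of_int (- \<lfloor>x$3 / real N3\<rfloor>) *\<^sub>R d3 N3)"
    by (intro intv_add intv_scale intv_d)
  moreover have "W N1 N2 N3 x = x + (of_int (- \<lfloor>x$1 / real N1\<rfloor>) *\<^sub>R d1 N1 + of_int (- \<lfloor>x$2 / real N2\<rfloor>) *\<^sub>R d2 N2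
        + of_int (- \<lfloor>x$3 / real N3\<rfloor>) *\<^sub>R d3 N3)" unfolding W_def by (simp only: add.assoc)
  ultimately show ?thesis using cl x unfolding gclosed_def by simp
qed

lemma W_box: "0<N1 \<Longrightarrow> 0<N2 \<Longrightarrow> 0<N3 \<Longrightarrow> gclosed G \<Longrightarrow> x \<in> G \<Longrightarrow> W N1 N2 N3 x \<in> period_box G N1 N2 N3"
proof -
  assume N: "0<N1" "0<N2" "0<N3" and cl: "gclosed G" and x: "x \<in> G"
  have "0 \<le> W N1 N2 N3 x $ 1 \<and> W N1 N2 N3 x $ 1 < real N1" unfolding W_comp by (rule wr_bounds[OF N(1)])
  moreover have "0 \<le> W N1 N2 N3 x $ 2 \<and> W N1 N2 N3 x $ 2 < real N2" unfolding W_comp by (rule wr_bounds[OF N(2)])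
  moreover have "0 \<le> W N1 N2 N3 x $ 3 \<and> W N1 N2 N3 x $ 3 < real N3" unfolding W_comp by (rule wr_bounds[OF N(3)])
  moreover have "W N1 N2 N3 x \<in> G" by (rule W_in_G[OF cl x])
  ultimately show ?thesis unfolding period_box_def by blast
qed

lemma W_id: "r \<in> period_box G N1 N2 N3 \<Longrightarrow> W N1 N2 N3 r = r"
  unfolding period_box_def by (simp add: vec_eq_iff forall_3 W_comp wr_id)

lemma W_g: "gclosed G \<Longrightarrow> lattice_periodic_on G N1 N2 N3 g \<Longrightarrow> x \<in> G \<Longrightarrow> g (W N1 N2 N3 x) = g x"
  unfolding W_def by (rule per3)

lemma W_minus: "W N1 N2 N3 (x + a) - a = x + of_int (- \<lfloor>(x+a)$1 / real N1\<rfloor>) *\<^sub>R d1 N1 + of_int (- \<lfloor>(x+a)$2 / real N2\<rfloor>) *\<^sub>R d2 N2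
        + of_int (- \<lfloor>(x+a)$3 / real N3\<rfloor>) *\<^sub>R d3 N3"
  unfolding W_def by (simp add: algebra_simps)

lemma W_plus: "W N1 N2 N3 (x - a) + a = x + of_int (- \<lfloor>(x-a)$1 / real N1\<rfloor>) *\<^sub>R d1 N1 + of_int (- \<lfloor>(x-a)$2 / real N2\<rfloor>) *\<^sub>R d2 N2
        + of_int (- \<lfloor>(x-a)$3 / real N3\<rfloor>) *\<^sub>R d3 N3"
  unfolding W_def by (simp add: algebra_simps)

lemma shift_sum:
  assumes N: "0<N1" "0<N2" "0<N3" and clG: "gclosed G" and clG': "gclosed G'"
    and a1: "\<forall>x\<in>G. x + a \<in> G'" and a2: "\<forall>y\<in>G'. y - a \<in> G"
    and per: "lattice_periodic_on G' N1 N2 N3 g"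
  shows "(\<Sum>r\<in>period_box G N1 N2 N3. g (r + a)) = (\<Sum>p\<in>period_box G' N1 N2 N3. g p)"
proof (rule sum.reindex_bij_witness[where j="\<lambda>r. W N1 N2 N3 (r + a)" and i="\<lambda>p. W N1 N2 N3 (p - a)"])
  fix r assume r: "r \<in> period_box G N1 N2 N3"
  then have rG: "r \<in> G" by (simp add: period_box_def)
  show "W N1 N2 N3 (W N1 N2 N3 (r + a) - a) = r"
    unfolding W_minus W_period[OF N] using W_id[OF r] .
  show "W N1 N2 N3 (r + a) \<in> period_box G' N1 N2 N3" using W_box[OF N clG'] a1 rG by blast
  show "g (W N1 N2 N3 (r + a)) = g (r + a)" using W_g[OF clG' per] a1 rG by blast
next
  fix p assume p: "p \<in> period_box G' N1 N2 N3"
  then have pG: "p \<in> G'" by (simp add: period_box_def)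
  show "W N1 N2 N3 (W N1 N2 N3 (p - a) + a) = p"
    unfolding W_plus W_period[OF N] using W_id[OF p] .
  show "W N1 N2 N3 (p - a) \<in> period_box G N1 N2 N3" using W_box[OF N clG] a2 pG by blast
qed




abbreviation "EE q r \<equiv> exp (- \<i> * complex_of_real (q \<bullet> r))"

lemma exp_shift_int: "exp (- \<i> * complex_of_real (x + 2 * pi * real h)) = exp (- \<i> * complex_of_real x)"
  unfolding exp_eq by (rule exI[of _ "- int h"]) (simp add: algebra_simps)

lemma QN_mult:
  assumes "q \<in> QN N1 N2 N3" "0<N1" "0<N2" "0<N3"
  shows "\<exists>h. q$1 * real N1 = 2 * pi * real h" "\<exists>h. q$2 * real N2 = 2 * pi * real h" "\<exists>h. q$3 * real N3 = 2 * pi * real h"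
  using QN_elem[OF assms(1)] assms(2-4) by auto

lemma EE_per:
  assumes "q \<in> QN N1 N2 N3" "0<N1" "0<N2" "0<N3"
  shows "lattice_periodic_on G N1 N2 N3 (EE q)"
proof -
  obtain h1 h2 h3 where h: "q$1 * real N1 = 2 * pi * real h1" "q$2 * real N2 = 2 * pi * real h2" "q$3 * real N3 = 2 * pi * real h3"
    using QN_mult[OF assms] by metis
  have "q \<bullet> (r + d1 N1) = q \<bullet> r + 2 * pi * real h1" "q \<bullet> (r + d2 N2) = q \<bullet> r + 2 * pi * real h2"
       "q \<bullet> (r + d3 N3) = q \<bullet> r + 2 * pi * real h3" for r
    using h by (simp_all add: inner_add_right inner3 vector_3 distrib_left)
  then show ?thesis unfolding lattice_periodic_on_def by (simp only: exp_shift_int) simp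
qed

lemma per_mult: "lattice_periodic_on G N1 N2 N3 f \<Longrightarrow> lattice_periodic_on G N1 N2 N3 g \<Longrightarrow> lattice_periodic_on G N1 N2 N3 (\<lambda>r. f r * g r)"
  unfolding lattice_periodic_on_def by simp

lemma per_comp: "lattice_periodic_on G N1 N2 N3 f \<Longrightarrow> lattice_periodic_on G N1 N2 N3 (\<lambda>r. h (f r))"
  unfolding lattice_periodic_on_def by simp

lemma dft_add: "dft G N1 N2 N3 (\<lambda>r. f r + g r) q = dft G N1 N2 N3 f q + dft G N1 N2 N3 g q"
  unfolding dft_def by (simp add: sum.distrib distrib_right distrib_left)
lemma dft_diff: "dft G N1 N2 N3 (\<lambda>r. f r - g r) q = dft G N1 N2 N3 f q - dft G N1 N2 N3 g q"
  unfolding dft_def by (simp add: sum_subtractf left_diff_distrib right_diff_distrib)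
lemma dft_cmult: "dft G N1 N2 N3 (\<lambda>r. c * f r) q = c * dft G N1 N2 N3 f q"
  unfolding dft_def by (simp add: sum_distrib_left algebra_simps)
lemma dft_uminus: "dft G N1 N2 N3 (\<lambda>r. - f r) q = - dft G N1 N2 N3 f q"
  unfolding dft_def by (simp add: sum_negf)
lemma dft_sum: "dft G N1 N2 N3 (\<lambda>r. \<Sum>k\<in>K. f k r) q = (\<Sum>k\<in>K. dft G N1 N2 N3 (f k) q)"
  unfolding dft_def by (simp add: sum_distrib_left sum_distrib_right sum.swap[of _ K])

lemma Tset_half: "e \<in> Tset \<Longrightarrow> e$i = 1/2 \<or> e$i = -1/2"
  unfolding Tset_def using exhaust_3[of i] by (auto simp: vector_3)

lemma half_int1: "(x::real) \<in> \<int> \<Longrightarrow> (c = 1/2 \<or> c = -1/2) \<Longrightarrow> x + c - 1/2 \<in> \<int>"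
proof -
  assume x: "x \<in> \<int>" and c: "c = 1/2 \<or> c = -1/2"
  from c show ?thesis
  proof
    assume "c = 1/2" then have eq: "x + c - 1/2 = x" by simp
    show ?thesis unfolding eq by (rule x)
  next
    assume "c = -1/2" then have eq: "x + c - 1/2 = x - 1" by simp
    show ?thesis unfolding eq using x by (intro Ints_diff Ints_1)
  qed
qed

lemma half_int2: "(y::real) - 1/2 \<in> \<int> \<Longrightarrow> (c = 1/2 \<or> c = -1/2) \<Longrightarrow> y - c \<in> \<int>"
proof -
  assume y: "y - 1/2 \<in> \<int>" and c: "c = 1/2 \<or> c = -1/2"
  from c show ?thesis
  proof
    assume "c = 1/2" then have eq: "y - c = y - 1/2" by simp
    show ?thesis unfolding eq by (rule y)
  next
    assume "c = -1/2" then have eq: "y - c = (y - 1/2) + 1" by simp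
    show ?thesis unfolding eq using y by (intro Ints_add Ints_1)
  qed
qed

lemma Tset_SP:
  assumes e: "e \<in> Tset"
  shows "\<forall>x\<in>Sgrid. x + e \<in> Pgrid" "\<forall>y\<in>Pgrid. y - e \<in> Sgrid"
        "\<forall>x\<in>Sgrid. x + (-e) \<in> Pgrid" "\<forall>y\<in>Pgrid. y - (-e) \<in> Sgrid"
proof -
  have h: "e$i = 1/2 \<or> e$i = -1/2" "(-e)$i = 1/2 \<or> (-e)$i = -1/2" for i using Tset_half[OF e, of i] by auto
  have A: "x + c \<in> Pgrid" if "x \<in> Sgrid" "\<And>i. c$i = 1/2 \<or> c$i = -1/2" for x c
  proof -
    have "(x + c)$i - 1/2 \<in> \<int>" for i
      using half_int1[of "x$i" "c$i"] that unfolding Sgrid_def by simp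
    then show ?thesis unfolding Pgrid_def by simp
  qed
  have B: "y - c \<in> Sgrid" if "y \<in> Pgrid" "\<And>i. c$i = 1/2 \<or> c$i = -1/2" for y c
  proof -
    have "(y - c)$i \<in> \<int>" for i
      using half_int2[of "y$i" "c$i"] that unfolding Pgrid_def by simp
    then show ?thesis unfolding Sgrid_def by simp
  qed
  show "\<forall>x\<in>Sgrid. x + e \<in> Pgrid" using A h(1) by blast
  show "\<forall>x\<in>Sgrid. x + (-e) \<in> Pgrid" using A h(2) by blast
  show "\<forall>y\<in>Pgrid. y - e \<in> Sgrid" using B h(1) by blast
  show "\<forall>y\<in>Pgrid. y - (-e) \<in> Sgrid" using B h(2) by blast
qed

lemma EE_shift: "EE q r = exp (\<i> * complex_of_real (q \<bullet> a)) * EE q (r + a)"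
proof -
  have "exp (\<i> * complex_of_real (q \<bullet> a)) * EE q (r + a) = exp (\<i> * complex_of_real (q \<bullet> a) + (- \<i> * complex_of_real (q \<bullet> (r + a))))"
    by (rule exp_add[symmetric])
  also have "\<i> * complex_of_real (q \<bullet> a) + (- \<i> * complex_of_real (q \<bullet> (r + a))) = - \<i> * complex_of_real (q \<bullet> r)"
    by (simp add: inner_add_right algebra_simps)
  finally show ?thesis by simp
qed

lemma shift_EE:
  assumes N: "0<N1" "0<N2" "0<N3" and q: "q \<in> QN N1 N2 N3" and f: "lattice_periodic_on Pgrid N1 N2 N3 f"
    and a1: "\<forall>x\<in>Sgrid. x + a \<in> Pgrid" and a2: "\<forall>y\<in>Pgrid. y - a \<in> Sgrid"
  shows "(\<Sum>r\<in>period_box Sgrid N1 N2 N3. complex_of_real (f (r + a)) * EE q r)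
        = exp (\<i> * complex_of_real (q \<bullet> a)) * (\<Sum>p\<in>period_box Pgrid N1 N2 N3. complex_of_real (f p) * EE q p)"
proof -
  have per: "lattice_periodic_on Pgrid N1 N2 N3 (\<lambda>p. complex_of_real (f p) * EE q p)"
    by (rule per_mult[OF per_comp[OF f] EE_per[OF q N]])
  have "(\<Sum>r\<in>period_box Sgrid N1 N2 N3. complex_of_real (f (r + a)) * EE q r)
      = (\<Sum>r\<in>period_box Sgrid N1 N2 N3. exp (\<i> * complex_of_real (q \<bullet> a)) * (complex_of_real (f (r + a)) * EE q (r + a)))"
    by (intro sum.cong refl) (subst EE_shift[of q _ a], simp)
  also have "\<dots> = exp (\<i> * complex_of_real (q \<bullet> a)) * (\<Sum>r\<in>period_box Sgrid N1 N2 N3. complex_of_real (f (r + a)) * EE q (r + a))"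
    by (simp add: sum_distrib_left)
  also have "(\<Sum>r\<in>period_box Sgrid N1 N2 N3. complex_of_real (f (r + a)) * EE q (r + a)) = (\<Sum>p\<in>period_box Pgrid N1 N2 N3. complex_of_real (f p) * EE q p)"
    by (rule shift_sum[OF N gclosed_S gclosed_P a1 a2 per])
  finally show ?thesis .
qed

lemma cnj_Dq: "cnj (Dq q $ i) = (\<Sum>e\<in>Tset. complex_of_real (e $ i) * exp (\<i> * complex_of_real (q \<bullet> (-e))))"
  unfolding Dq_def by (simp add: exp_cnj)

lemma dft_Dplus:
  assumes N: "0<N1" "0<N2" "0<N3" and q: "q \<in> QN N1 N2 N3" and f: "lattice_periodic_on Pgrid N1 N2 N3 f"
  shows "dft Sgrid N1 N2 N3 (\<lambda>r. complex_of_real (Dplus f r i)) q = Dq q $ i * dft Pgrid N1 N2 N3 (\<lambda>p. complex_of_real (f p)) q"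
proof -
  let ?F = "(\<Sum>p\<in>period_box Pgrid N1 N2 N3. complex_of_real (f p) * EE q p)"
  have "(\<Sum>r\<in>period_box Sgrid N1 N2 N3. complex_of_real (Dplus f r i) * EE q r)
      = (\<Sum>r\<in>period_box Sgrid N1 N2 N3. \<Sum>e\<in>Tset. complex_of_real (e$i) * (complex_of_real (f (r + e)) * EE q r))"
    unfolding Dplus_def by (simp add: sum_distrib_right mult.assoc)
  also have "\<dots> = (\<Sum>e\<in>Tset. complex_of_real (e$i) * (\<Sum>r\<in>period_box Sgrid N1 N2 N3. complex_of_real (f (r + e)) * EE q r))"
    by (subst sum.swap) (simp add: sum_distrib_left)
  also have "\<dots> = (\<Sum>e\<in>Tset. complex_of_real (e$i) * (exp (\<i> * complex_of_real (q \<bullet> e)) * ?F))"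
    by (intro sum.cong refl arg_cong2[where f="(*)"] shift_EE[OF N q f] Tset_SP)
  also have "\<dots> = Dq q $ i * ?F"
    unfolding Dq_def by (simp add: sum_distrib_right mult.assoc)
  finally show ?thesis unfolding dft_def by simp
qed

lemma dft_Dminus:
  assumes N: "0<N1" "0<N2" "0<N3" and q: "q \<in> QN N1 N2 N3" and f: "lattice_periodic_on Pgrid N1 N2 N3 f"
  shows "dft Sgrid N1 N2 N3 (\<lambda>r. complex_of_real (Dminus f r i)) q = - cnj (Dq q $ i) * dft Pgrid N1 N2 N3 (\<lambda>p. complex_of_real (f p)) q"
proof -
  let ?F = "(\<Sum>p\<in>period_box Pgrid N1 N2 N3. complex_of_real (f p) * EE q p)"
  have "(\<Sum>r\<in>period_box Sgrid N1 N2 N3. complex_of_real (Dminus f r i) * EE q r)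
      = - (\<Sum>r\<in>period_box Sgrid N1 N2 N3. \<Sum>e\<in>Tset. complex_of_real (e$i) * (complex_of_real (f (r + (-e))) * EE q r))"
    unfolding Dminus_def by (simp add: sum_distrib_right mult.assoc sum_negf)
  also have "(\<Sum>r\<in>period_box Sgrid N1 N2 N3. \<Sum>e\<in>Tset. complex_of_real (e$i) * (complex_of_real (f (r + (-e))) * EE q r))
      = (\<Sum>e\<in>Tset. complex_of_real (e$i) * (\<Sum>r\<in>period_box Sgrid N1 N2 N3. complex_of_real (f (r + (-e))) * EE q r))"
    by (subst sum.swap) (simp add: sum_distrib_left)
  also have "\<dots> = (\<Sum>e\<in>Tset. complex_of_real (e$i) * (exp (\<i> * complex_of_real (q \<bullet> (-e))) * ?F))"
    by (intro sum.cong refl arg_cong2[where f="(*)"] shift_EE[OF N q f] Tset_SP)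
  also have "\<dots> = cnj (Dq q $ i) * ?F"
    unfolding cnj_Dq by (simp add: sum_distrib_right mult.assoc)
  finally show ?thesis unfolding dft_def by simp
qed




lemma EE_sum_zero_u:
  assumes N: "0<N1" "0<N2" "0<N3" and q: "q \<in> QN N1 N2 N3" and u: "intv u"
    and ne: "exp (- \<i> * complex_of_real (q \<bullet> u)) \<noteq> 1"
  shows "(\<Sum>r\<in>period_box Sgrid N1 N2 N3. EE q r) = 0"
proof -
  let ?T = "(\<Sum>r\<in>period_box Sgrid N1 N2 N3. EE q r)"
  have a1: "\<forall>x\<in>Sgrid. x + u \<in> Sgrid" using gclosed_S u unfolding gclosed_def by blast
  have a2: "\<forall>y\<in>Sgrid. y - u \<in> Sgrid" using gclosed_diff[OF gclosed_S _ u] by blast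
  have "(\<Sum>r\<in>period_box Sgrid N1 N2 N3. EE q (r + u)) = ?T"
    by (rule shift_sum[OF N gclosed_S gclosed_S a1 a2 EE_per[OF q N]])
  moreover have "EE q (r + u) = exp (- \<i> * complex_of_real (q \<bullet> u)) * EE q r" for r
  proof -
    have "- \<i> * complex_of_real (q \<bullet> (r + u)) = - \<i> * complex_of_real (q \<bullet> u) + - \<i> * complex_of_real (q \<bullet> r)"
      by (simp add: inner_add_right algebra_simps)
    then show ?thesis by (simp only: exp_add)
  qed
  ultimately have "exp (- \<i> * complex_of_real (q \<bullet> u)) * ?T = ?T" by (simp add: sum_distrib_left)
  then have "(exp (- \<i> * complex_of_real (q \<bullet> u)) - 1) * ?T = 0" by (simp add: algebra_simps)
  then show ?thesis using ne by simp
qed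

lemma exp_ne1:
  assumes "0 < x" "x < 2 * pi"
  shows "exp (- \<i> * complex_of_real x) \<noteq> 1"
proof
  assume "exp (- \<i> * complex_of_real x) = 1"
  then have "exp (\<i> * complex_of_real (-x)) = exp (\<i> * complex_of_real 0)" by simp
  then obtain n :: int where n: "-x = 0 + 2 * pi * of_int n" using exp_ii_eq by blast
  have p: "0 < 2 * pi" using pi_gt_zero by simp
  have "real_of_int (-n) = x / (2 * pi)" using n p by (simp add: field_simps)
  moreover have "0 < x / (2 * pi)" using assms p by simp
  moreover have "x / (2 * pi) < 1" using assms p by simp
  ultimately have "0 < real_of_int (-n)" "real_of_int (-n) < 1" by simp_all
  then have "0 < -n" "-n < 1" by linarith+
  then show False by simp
qed

lemma dft_const_zero:
  assumes N: "0<N1" "0<N2" "0<N3" and q: "q \<in> QN N1 N2 N3" and q0: "q \<noteq> 0"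
  shows "dft Sgrid N1 N2 N3 (\<lambda>r. c) q = 0"
proof -
  have "(\<Sum>r\<in>period_box Sgrid N1 N2 N3. EE q r) = 0"
  proof -
    obtain k where k: "q$k \<noteq> 0" using q0 by (auto simp: vec_eq_iff)
    have "k = 1 \<or> k = 2 \<or> k = 3" using exhaust_3 by blast
    then show ?thesis
    proof (elim disjE)
      assume "k = 1"
      then have "0 < q \<bullet> vector [1,0,0]" "q \<bullet> vector [1,0,0] < 2*pi" using k QN_bounds(1)[OF q] by (auto simp: inner3 vector_3)
      then show ?thesis by (intro EE_sum_zero_u[OF N q _ exp_ne1]) (auto simp: intv_def forall_3 vector_3)
    next
      assume "k = 2"
      then have "0 < q \<bullet> vector [0,1,0]" "q \<bullet> vector [0,1,0] < 2*pi" using k QN_bounds(2)[OF q] by (auto simp: inner3 vector_3)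
      then show ?thesis by (intro EE_sum_zero_u[OF N q _ exp_ne1]) (auto simp: intv_def forall_3 vector_3)
    next
      assume "k = 3"
      then have "0 < q \<bullet> vector [0,0,1]" "q \<bullet> vector [0,0,1] < 2*pi" using k QN_bounds(3)[OF q] by (auto simp: inner3 vector_3)
      then show ?thesis by (intro EE_sum_zero_u[OF N q _ exp_ne1]) (auto simp: intv_def forall_3 vector_3)
    qed
  qed
  moreover have "(\<Sum>r\<in>period_box Sgrid N1 N2 N3. c * EE q r) = c * (\<Sum>r\<in>period_box Sgrid N1 N2 N3. EE q r)"
    by (rule sum_distrib_left[symmetric])
  ultimately show ?thesis unfolding dft_def by simp
qed




lemma mv_uminus_r: "(A::'a::comm_ring_1^'n^'m) *v (- x) = - (A *v x)"
  by (simp add: matrix_vector_mult_def vec_eq_iff sum_negf)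
lemma mv_uminus_l: "(- A::'a::comm_ring_1^'n^'m) *v x = - (A *v x)"
  by (simp add: matrix_vector_mult_def vec_eq_iff sum_negf)
lemma contr_uminus: "contr (L::3\<Rightarrow>3\<Rightarrow>3\<Rightarrow>3\<Rightarrow>'a::comm_ring_1) (- X) = - contr L X"
  by (simp add: contr_def vec_eq_iff sum_negf)
lemma contr_zero: "contr (L::3\<Rightarrow>3\<Rightarrow>3\<Rightarrow>3\<Rightarrow>'a::comm_ring_1) 0 = 0"
  by (simp add: contr_def vec_eq_iff)

lemma dft_deps1:
  assumes N: "0<N1" "0<N2" "0<N3" and q: "q \<in> QN N1 N2 N3" and u: "lattice_periodic_on Pgrid N1 N2 N3 u"
  shows "dft_mat Sgrid N1 N2 N3 (deps 1 u) q = symprod (Dq q) (dft_vec Pgrid N1 N2 N3 u q)"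
proof -
  have "dft Sgrid N1 N2 N3 (\<lambda>r. complex_of_real (deps 1 u r $ i $ j)) q = symprod (Dq q) (dft_vec Pgrid N1 N2 N3 u q) $ i $ j" for i j
  proof -
    have eq: "(\<lambda>r. complex_of_real (deps 1 u r $ i $ j)) = (\<lambda>r. (1/2) * (complex_of_real (Dplus (\<lambda>p. u p $ j) r i) + complex_of_real (Dplus (\<lambda>p. u p $ i) r j)))"
      by (simp add: deps_def Dpm_def)
    show ?thesis
      unfolding eq dft_cmult dft_add dft_Dplus[OF N q per_comp[OF u, of "\<lambda>v. v$j"]] dft_Dplus[OF N q per_comp[OF u, of "\<lambda>v. v$i"]] by (simp add: symprod_def dft_vec_def)
  qed
  then show ?thesis by (simp add: dft_mat_def vec_eq_iff)
qed

lemma dft_deps2: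
  assumes N: "0<N1" "0<N2" "0<N3" and q: "q \<in> QN N1 N2 N3" and u: "lattice_periodic_on Pgrid N1 N2 N3 u"
  shows "dft_mat Sgrid N1 N2 N3 (deps 2 u) q = - symprod (cvec (Dq q)) (dft_vec Pgrid N1 N2 N3 u q)"
proof -
  have "dft Sgrid N1 N2 N3 (\<lambda>r. complex_of_real (deps 2 u r $ i $ j)) q = - symprod (cvec (Dq q)) (dft_vec Pgrid N1 N2 N3 u q) $ i $ j" for i j
  proof -
    have eq: "(\<lambda>r. complex_of_real (deps 2 u r $ i $ j)) = (\<lambda>r. (1/2) * (complex_of_real (Dminus (\<lambda>p. u p $ j) r i) + complex_of_real (Dminus (\<lambda>p. u p $ i) r j)))"
      by (simp add: deps_def Dpm_def)
    show ?thesis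
      unfolding eq dft_cmult dft_add dft_Dminus[OF N q per_comp[OF u, of "\<lambda>v. v$j"]] dft_Dminus[OF N q per_comp[OF u, of "\<lambda>v. v$i"]] by (simp add: symprod_def dft_vec_def cvec_def algebra_simps)
  qed
  then show ?thesis by (simp add: dft_mat_def vec_eq_iff)
qed

lemma dft_epsm:
  assumes N: "0<N1" "0<N2" "0<N3" and q: "q \<in> QN N1 N2 N3" and q0: "q \<noteq> 0"
  shows "dft_mat Sgrid N1 N2 N3 (epsm m ebar u) q = dft_mat Sgrid N1 N2 N3 (deps m u) q"
proof -
  have "dft Sgrid N1 N2 N3 (\<lambda>r. complex_of_real (epsm m ebar u r $ i $ j)) q = dft Sgrid N1 N2 N3 (\<lambda>r. complex_of_real (deps m u r $ i $ j)) q" for i j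
  proof -
    have "(\<lambda>r. complex_of_real (epsm m ebar u r $ i $ j)) = (\<lambda>r. complex_of_real (ebar $ i $ j) + complex_of_real (deps m u r $ i $ j))"
      by (simp add: epsm_def)
    then show ?thesis by (simp add: dft_add dft_const_zero[OF N q q0])
  qed
  then show ?thesis by (simp add: dft_mat_def vec_eq_iff)
qed

lemma dft_taum:
  "dft_mat G N1 N2 N3 (taum m lam lam0 eps0 ebar u) q = dft_mat G N1 N2 N3 (sigm m lam eps0 ebar u) q
     - contr (ctensor lam0) (dft_mat G N1 N2 N3 (epsm m ebar u) q)"
proof -
  have "dft G N1 N2 N3 (\<lambda>r. complex_of_real (taum m lam lam0 eps0 ebar u r $ i $ j)) q =
        dft G N1 N2 N3 (\<lambda>r. complex_of_real (sigm m lam eps0 ebar u r $ i $ j)) q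
        - (\<Sum>k\<in>UNIV. \<Sum>l\<in>UNIV. complex_of_real (lam0 i j k l) * dft G N1 N2 N3 (\<lambda>r. complex_of_real (epsm m ebar u r $ k $ l)) q)" for i j
  proof -
    have "(\<lambda>r. complex_of_real (taum m lam lam0 eps0 ebar u r $ i $ j)) = (\<lambda>r. complex_of_real (sigm m lam eps0 ebar u r $ i $ j)
        - (\<Sum>k\<in>UNIV. \<Sum>l\<in>UNIV. complex_of_real (lam0 i j k l) * complex_of_real (epsm m ebar u r $ k $ l)))"
      by (simp add: taum_def contr_def)
    then show ?thesis by (simp add: dft_diff dft_sum dft_cmult)
  qed
  then show ?thesis by (simp add: dft_mat_def vec_eq_iff contr_def ctensor_def)
qed

lemma Dq0: "Dq 0 = 0"
  by (simp add: Dq_def Tset_sum vec_eq_iff forall_3 vector_3)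




theorem mainTheorem6:
  fixes N1 N2 N3 :: nat
    and lam :: "real^3 \<Rightarrow> tensor4" and lam0 :: tensor4
    and eps0 :: "real^3 \<Rightarrow> real^3^3" and ebar :: "real^3^3"
    and u :: "real^3 \<Rightarrow> real^3"
  assumes N_pos: "0 < N1" "0 < N2" "0 < N3"
    and N_even: "even N1" "even N2" "even N3"
    and ebar_sym: "transpose ebar = ebar"
    and lam_sym: "\<forall>r\<in>Sgrid. minor_major_sym (lam r)"
    and lam_per: "lattice_periodic_on Sgrid N1 N2 N3 lam"
    and eps0_sym: "\<forall>r\<in>Sgrid. transpose (eps0 r) = eps0 r"
    and eps0_per: "lattice_periodic_on Sgrid N1 N2 N3 eps0"
    and lam0_sym: "minor_major_sym lam0"
    and lam0_pd: "pos_def_sym lam0"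
    and u_per: "lattice_periodic_on Pgrid N1 N2 N3 u"
    and u0: "dft_vec Pgrid N1 N2 N3 u 0 = 0"
    and upi: "dft_vec Pgrid N1 N2 N3 u (vector [pi, pi, pi]) = 0"
  shows
    "(\<forall>q\<in>QN N1 N2 N3.
        Omega lam0 q *v (- (dft_mat Sgrid N1 N2 N3 (taum 1 lam lam0 eps0 ebar u) q *v cvec (Dq q))
                         + dft_mat Sgrid N1 N2 N3 (taum 2 lam lam0 eps0 ebar u) q *v Dq q)
        = dft_vec Pgrid N1 N2 N3 u q
          - Omega lam0 q *v (dft_mat Sgrid N1 N2 N3 (sigm 1 lam eps0 ebar u) q *v cvec (Dq q)
                             - dft_mat Sgrid N1 N2 N3 (sigm 2 lam eps0 ebar u) q *v Dq q))
     \<and> (\<forall>q\<in>QN N1 N2 N3. \<forall>v::complex^3. (Dq q = 0 \<longrightarrow> v = 0) \<longrightarrow>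
        Omega lam0 q *v (contr (ctensor lam0) (symprod (Dq q) v) *v cvec (Dq q)
                         + contr (ctensor lam0) (symprod (cvec (Dq q)) v) *v Dq q) = v)"
proof (intro conjI ballI allI impI)
  let ?C = "ctensor lam0"
  have part2: "Omega lam0 q *v (contr ?C (symprod (Dq q) v) *v cvec (Dq q) + contr ?C (symprod (cvec (Dq q)) v) *v Dq q) = v"
    if "Dq q = 0 \<longrightarrow> v = 0" for q v
  proof (cases "Dq q = 0")
    case True
    then show ?thesis using that by (simp add: Omega_def)
  next
    case False
    have "contr ?C (symprod (Dq q) v) *v cvec (Dq q) + contr ?C (symprod (cvec (Dq q)) v) *v Dq q = Mg ?C (Dq q) *v v"
      by (rule Mg_identity[OF ctensor_minor[OF lam0_sym] ctensor_minor2[OF lam0_sym], symmetric])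
    then show ?thesis using False Mg_inv[OF lam0_sym lam0_pd False] by (simp add: Omega_def Mq_Mg)
  qed
  fix q assume q: "q \<in> QN N1 N2 N3"
  {
    fix v :: "complex^3" assume "Dq q = 0 \<longrightarrow> v = 0"
    then show "Omega lam0 q *v (contr ?C (symprod (Dq q) v) *v cvec (Dq q) + contr ?C (symprod (cvec (Dq q)) v) *v Dq q) = v"
      by (rule part2)
  }
  let ?U = "dft_vec Pgrid N1 N2 N3 u q"
  let ?D = "Dq q"
  let ?A1 = "dft_mat Sgrid N1 N2 N3 (sigm 1 lam eps0 ebar u) q"
  let ?A2 = "dft_mat Sgrid N1 N2 N3 (sigm 2 lam eps0 ebar u) q"
  show "Omega lam0 q *v (- (dft_mat Sgrid N1 N2 N3 (taum 1 lam lam0 eps0 ebar u) q *v cvec ?D)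
                         + dft_mat Sgrid N1 N2 N3 (taum 2 lam lam0 eps0 ebar u) q *v ?D)
        = ?U - Omega lam0 q *v (?A1 *v cvec ?D - ?A2 *v ?D)"
  proof (cases "?D = 0")
    case True
    then have "q = 0 \<or> q = vector [pi, pi, pi]" using Dq_zero[OF q] by blast
    then have "?U = 0" using u0 upi by blast
    then show ?thesis using True by (simp add: Omega_def)
  next
    case False
    then have q0: "q \<noteq> 0" using Dq0 by auto
    have t1: "dft_mat Sgrid N1 N2 N3 (taum 1 lam lam0 eps0 ebar u) q = ?A1 - contr ?C (symprod ?D ?U)"
      unfolding dft_taum dft_epsm[OF N_pos q q0] dft_deps1[OF N_pos q u_per] ..
    have t2: "dft_mat Sgrid N1 N2 N3 (taum 2 lam lam0 eps0 ebar u) q = ?A2 + contr ?C (symprod (cvec ?D) ?U)"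
      unfolding dft_taum dft_epsm[OF N_pos q q0] dft_deps2[OF N_pos q u_per] contr_uminus by simp
    have inner: "- ((?A1 - contr ?C (symprod ?D ?U)) *v cvec ?D) + (?A2 + contr ?C (symprod (cvec ?D) ?U)) *v ?D
        = (contr ?C (symprod ?D ?U) *v cvec ?D + contr ?C (symprod (cvec ?D) ?U) *v ?D) - (?A1 *v cvec ?D - ?A2 *v ?D)"
      by (simp add: matrix_vector_mult_diff_rdistrib matrix_vector_mult_add_rdistrib algebra_simps)
    show ?thesis
      unfolding t1 t2 inner matrix_vector_mult_diff_distrib part2[of q ?U] using False part2[of q ?U] by simp
  qed
qed


end
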